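(* Let $\mathbf{A}\in\mathbb{R}^{n\times n}$ be positive semidefinite and let $\mathbf{u}\in\mathbb{R}^n$ satisfy $\mathbf{u}\not\perp\mathrm{Ker}(\mathbf{A})$. Then $\mathrm{Det}(\mathbf{A}+\mathbf{u}\mathbf{u}^\top)\ge\lambda_{\min}(\mathbf{A}+\mathbf{u}\mathbf{u}^\top)\,\mathrm{Det}(\mathbf{A})$.
   Context: $\mathrm{Det}(\mathbf{M})$ is the product of the nonzero eigenvalues of $\mathbf{M}$ (with $\mathrm{Det}(\mathbf{O})=1$). $\lambda_{\min}(\mathbf{M})$ denotes the smallest nonzero eigenvalue of $\mathbf{M}$. $\mathbf{u}\not\perp\mathrm{Ker}(\mathbf{A})$ means there is $\mathbf{y}\in\mathrm{Ker}(\mathbf{A})$ with $\mathbf{u}^\top\mathbf{y}\ne0$. *)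

theory Defs
  imports "Jordan_Normal_Form.Matrix_Kernel" "Jordan_Normal_Form.Char_Poly"
begin

definition psd_mat :: "nat \<Rightarrow> real mat \<Rightarrow> bool" where
  "psd_mat n A \<longleftrightarrow> A \<in> carrier_mat n n \<and> A\<^sup>T = A \<and>
     (\<forall>v \<in> carrier_vec n. 0 \<le> v \<bullet> (A *\<^sub>v v))"

definition outer_prod :: "real vec \<Rightarrow> real mat" where
  "outer_prod u = mat (dim_vec u) (dim_vec u) (\<lambda>(i,j). u $ i * u $ j)"

(* pseudo-determinant: product of the nonzero eigenvalues, counted with
   algebraic multiplicity (roots of the characteristic polynomial);
   equals 1 for the zero matrix *)
definition pdet :: "real mat \<Rightarrow> real" where
  "pdet A = prod_mset (filter_mset (\<lambda>x. x \<noteq> 0) (proots (char_poly A)))"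

definition lambda_min_nz :: "real mat \<Rightarrow> real" where
  "lambda_min_nz A = Min {x. eigenvalue A x \<and> x \<noteq> 0}"

end

theory Submission
  imports Defs
begin

lemma real_sym_eigenvector:
  fixes M :: "real mat"
  assumes M: "M \<in> carrier_mat n n" and sym: "M\<^sup>T = M" and n: "n > 0"
  shows "\<exists>r v. v \<in> carrier_vec n \<and> v \<noteq> 0\<^sub>v n \<and> M *\<^sub>v v = r \<cdot>\<^sub>v v"
proof -
  let ?Mc = "of_real_hom.mat_hom M :: complex mat"
  have Mc: "?Mc \<in> carrier_mat n n" using M by auto
  have "degree (char_poly ?Mc) = n" using degree_monic_char_poly[OF Mc] by auto
  hence "\<not> constant (poly (char_poly ?Mc))" using n constant_degree[of "char_poly ?Mc"] by auto
  then obtain z where "poly (char_poly ?Mc) z = 0" using fundamental_theorem_of_algebra by blast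
  hence "eigenvalue ?Mc z" using eigenvalue_root_char_poly[OF Mc] by auto
  then obtain v where ev: "eigenvector ?Mc v z" unfolding eigenvalue_def by auto
  hence v: "v \<in> carrier_vec n" and v0: "v \<noteq> 0\<^sub>v n" and Mv: "?Mc *\<^sub>v v = z \<cdot>\<^sub>v v"
    unfolding eigenvector_def using Mc by auto
  have Mvi: "(\<Sum>j<n. complex_of_real (M $$ (i,j)) * v $ j) = z * v $ i" if i: "i < n" for i
  proof -
    have "(?Mc *\<^sub>v v) $ i = z * v $ i" using Mv i v by simp
    moreover have "(?Mc *\<^sub>v v) $ i = (\<Sum>j<n. complex_of_real (M $$ (i,j)) * v $ j)"
      using i M v by (auto simp: mult_mat_vec_def scalar_prod_def lessThan_atLeast0 intro!: sum.cong)
    ultimately show ?thesis by simp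
  qed
  define s where "s = (\<Sum>i<n. cnj (v $ i) * (\<Sum>j<n. complex_of_real (M $$ (i,j)) * v $ j))"
  define t where "t = (\<Sum>i<n. cnj (v $ i) * v $ i)"
  have "s = (\<Sum>i<n. cnj (v $ i) * (z * v $ i))" unfolding s_def by (rule sum.cong, auto simp: Mvi)
  hence s_t: "s = z * t" unfolding t_def by (simp add: sum_distrib_left mult.left_commute)
  have "cnj s = (\<Sum>i<n. v $ i * (\<Sum>j<n. complex_of_real (M $$ (i,j)) * cnj (v $ j)))"
    unfolding s_def by (simp add: sum_distrib_left)
  also have "\<dots> = (\<Sum>i<n. \<Sum>j<n. v $ i * complex_of_real (M $$ (i,j)) * cnj (v $ j))"
    by (simp add: sum_distrib_left mult.assoc)
  also have "\<dots> = (\<Sum>j<n. \<Sum>i<n. v $ i * complex_of_real (M $$ (i,j)) * cnj (v $ j))"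
    by (rule sum.swap)
  also have "\<dots> = (\<Sum>j<n. \<Sum>i<n. cnj (v $ j) * (complex_of_real (M $$ (j,i)) * v $ i))"
  proof (intro sum.cong refl)
    fix i j assume "i \<in> {..<n}" "j \<in> {..<n}"
    hence "M $$ (i,j) = M $$ (j,i)" using arg_cong[OF sym, of "\<lambda>X. X $$ (j,i)"] M by auto
    thus "v $ i * complex_of_real (M $$ (i,j)) * cnj (v $ j) = cnj (v $ j) * (complex_of_real (M $$ (j,i)) * v $ i)"
      by simp
  qed
  also have "\<dots> = s" unfolding s_def by (simp add: sum_distrib_left)
  finally have cs: "cnj s = s" .
  have tpos: "t = complex_of_real (\<Sum>i<n. (cmod (v $ i))\<^sup>2)"
    unfolding t_def of_real_sum by (intro sum.cong refl, subst complex_norm_square, simp add: mult.commute)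
  have "\<exists>i<n. v $ i \<noteq> 0"
  proof (rule ccontr)
    assume "\<not> ?thesis"
    hence "v = 0\<^sub>v n" using v by (intro eq_vecI, auto)
    with v0 show False by simp
  qed
  then obtain i where i: "i < n" "v $ i \<noteq> 0" by auto
  have "(\<Sum>i<n. (cmod (v $ i))\<^sup>2) > 0"
    by (rule sum_pos2[of _ i], insert i, auto)
  hence t0: "t \<noteq> 0" "cnj t = t" unfolding tpos of_real_eq_0_iff complex_cnj_complex_of_real by auto
  have "cnj s = cnj z * cnj t" using s_t by simp
  hence "cnj z * t = z * t" using s_t cs t0 by simp
  hence "cnj z = z" using t0 by simp
  hence "Im z = 0" by (metis complex_cnj_cancel_iff complex.sel(2) neg_equal_zero cnj.simps(2))
  hence zr: "z = complex_of_real (Re z)" by (simp add: complex_eq_iff)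
  define r where "r = Re z"
  define x where "x = vec n (\<lambda>i. Re (v $ i))"
  define y where "y = vec n (\<lambda>i. Im (v $ i))"
  have Mx: "M *\<^sub>v x = r \<cdot>\<^sub>v x" and My: "M *\<^sub>v y = r \<cdot>\<^sub>v y"
  proof -
    {
      fix i assume i: "i < n"
      have "(M *\<^sub>v x) $ i = (\<Sum>j<n. M $$ (i,j) * Re (v $ j))"
        using i M by (auto simp: x_def mult_mat_vec_def scalar_prod_def lessThan_atLeast0 intro!: sum.cong)
      also have "\<dots> = Re (\<Sum>j<n. complex_of_real (M $$ (i,j)) * v $ j)"
        by (simp add: Re_sum)
      also have "\<dots> = Re (z * v $ i)" using Mvi[OF i] by simp
      also have "\<dots> = r * Re (v $ i)" unfolding r_def by (subst zr, simp)
      finally have "(M *\<^sub>v x) $ i = (r \<cdot>\<^sub>v x) $ i" using i by (simp add: x_def)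
    }
    thus "M *\<^sub>v x = r \<cdot>\<^sub>v x" using M by (intro eq_vecI, auto simp: x_def)
    {
      fix i assume i: "i < n"
      have "(M *\<^sub>v y) $ i = (\<Sum>j<n. M $$ (i,j) * Im (v $ j))"
        using i M by (auto simp: y_def mult_mat_vec_def scalar_prod_def lessThan_atLeast0 intro!: sum.cong)
      also have "\<dots> = Im (\<Sum>j<n. complex_of_real (M $$ (i,j)) * v $ j)"
        by (simp add: Im_sum)
      also have "\<dots> = Im (z * v $ i)" using Mvi[OF i] by simp
      also have "\<dots> = r * Im (v $ i)" unfolding r_def by (subst zr, simp)
      finally have "(M *\<^sub>v y) $ i = (r \<cdot>\<^sub>v y) $ i" using i by (simp add: y_def)
    }
    thus "M *\<^sub>v y = r \<cdot>\<^sub>v y" using M by (intro eq_vecI, auto simp: y_def)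
  qed
  have "x \<noteq> 0\<^sub>v n \<or> y \<noteq> 0\<^sub>v n"
  proof (rule ccontr)
    assume "\<not> ?thesis"
    hence "x $ i = 0" "y $ i = 0" using i by auto
    hence "v $ i = 0" using i by (simp add: x_def y_def complex_eq_iff)
    thus False using i by simp
  qed
  moreover have "x \<in> carrier_vec n" "y \<in> carrier_vec n" by (auto simp: x_def y_def)
  ultimately show ?thesis using Mx My by blast
qed

lemma sum_delta_l: "i < (n::nat) \<Longrightarrow> (\<Sum>k<n. (if i = k then 1 else 0) * f k) = (f i :: real)"
proof -
  have "(\<Sum>k<n. (if i = k then 1 else 0) * f k) = (\<Sum>k<n. if k = i then f k else 0)" by (rule sum.cong) auto
  thus "i < n \<Longrightarrow> ?thesis" by simp
qed
lemma sum_delta_r: "i < (n::nat) \<Longrightarrow> (\<Sum>k<n. (if k = i then 1 else 0) * f k) = (f i :: real)"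
proof -
  have "(\<Sum>k<n. (if k = i then 1 else 0) * f k) = (\<Sum>k<n. if k = i then f k else 0)" by (rule sum.cong) auto
  thus "i < n \<Longrightarrow> ?thesis" by simp
qed

lemma householder:
  fixes v :: "real vec"
  assumes v: "v \<in> carrier_vec n" and vv: "v \<bullet> v = 1" and n: "n > 0"
  shows "\<exists>H. H \<in> carrier_mat n n \<and> H\<^sup>T = H \<and> H * H = 1\<^sub>m n \<and> H *\<^sub>v v = unit_vec n 0"
proof -
  define h where "h = v - unit_vec n 0"
  have h: "h \<in> carrier_vec n" using v by (auto simp: h_def)
  have hv: "h \<bullet> v = 1 - v $ 0" unfolding h_def using v n vv
    by (subst minus_scalar_prod_distrib[of _ n], auto simp: comm_scalar_prod[of "unit_vec n 0" n])
  have hh: "h \<bullet> h = 2 * (1 - v $ 0)" unfolding h_def using v n vv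
    by (subst minus_scalar_prod_distrib[of _ n], auto simp: scalar_prod_minus_distrib[of _ n] comm_scalar_prod[of "unit_vec n 0" n])
  show ?thesis
  proof (cases "h \<bullet> h = 0")
    case True
    hence "v $ 0 = 1" using hh by simp
    hence "h \<bullet> v = 0" using hv by simp
    have "h = 0\<^sub>v n"
    proof (rule eq_vecI)
      fix i assume i: "i < dim_vec (0\<^sub>v n)"
      have "h \<bullet> h = (\<Sum>k<n. (h $ k)^2)" using h by (simp add: scalar_prod_def power2_eq_square lessThan_atLeast0)
      moreover have "(\<Sum>k<n. (h $ k)^2) \<ge> (h $ i)^2" using i by (intro member_le_sum, auto)
      ultimately show "h $ i = 0\<^sub>v n $ i" using True i by simp
    qed (use h in auto)
    hence h0: "\<And>i. i < n \<Longrightarrow> h $ i = 0" by auto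
    have "v = unit_vec n 0"
    proof (rule eq_vecI)
      fix i assume "i < dim_vec (unit_vec n 0)"
      thus "v $ i = unit_vec n 0 $ i" using h0[of i] v by (auto simp: h_def)
    qed (use v in auto)
    thus ?thesis by (intro exI[of _ "1\<^sub>m n"], auto)
  next
    case False
    define c where "c = 2 / (h \<bullet> h)"
    define H where "H = mat n n (\<lambda>(i,j). (if i = j then 1 else 0) - c * h $ i * h $ j)"
    have cs: "c * (h \<bullet> h) = 2" "c * (h \<bullet> v) = 1" using False hh hv by (auto simp: c_def field_simps)
    have hsum: "(\<Sum>k<n. h $ k * h $ k) = h \<bullet> h" using h by (simp add: scalar_prod_def lessThan_atLeast0)
    have hvsum: "(\<Sum>k<n. h $ k * v $ k) = h \<bullet> v" using h v by (simp add: scalar_prod_def lessThan_atLeast0)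
    have HH: "H * H = 1\<^sub>m n"
    proof (rule eq_matI)
      fix i j assume i: "i < dim_row (1\<^sub>m n)" and j: "j < dim_col (1\<^sub>m n)"
      hence i: "i < n" and j: "j < n" by auto
      have "(H * H) $$ (i,j) = (\<Sum>k<n. ((if i = k then 1 else 0) - c * h $ i * h $ k) * ((if k = j then 1 else 0) - c * h $ k * h $ j))"
        using i j by (simp add: H_def scalar_prod_def lessThan_atLeast0)
      also have "\<dots> = (\<Sum>k<n. (if i = k then 1 else 0) * (if k = j then 1 else 0)) 
         - (\<Sum>k<n. (if i = k then 1 else 0) * (c * h $ k * h $ j))
         - (\<Sum>k<n. (if k = j then 1 else 0) * (c * h $ i * h $ k))
         + c * c * h $ i * h $ j * (\<Sum>k<n. h $ k * h $ k)"
        by (simp add: sum_subtractf sum.distrib sum_distrib_left algebra_simps)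
      also have "\<dots> = (if i = j then 1 else 0) - 2 * c * h $ i * h $ j + c * h $ i * h $ j * (c * (h \<bullet> h))"
        using i j unfolding hsum by (simp add: sum_delta_l sum_delta_r)
      also have "\<dots> = 1\<^sub>m n $$ (i,j)" using cs i j by simp
      finally show "(H * H) $$ (i,j) = 1\<^sub>m n $$ (i,j)" .
    qed (auto simp: H_def)
    have Hv: "H *\<^sub>v v = unit_vec n 0"
    proof (rule eq_vecI)
      fix i assume i: "i < dim_vec (unit_vec n 0)"
      hence i: "i < n" by auto
      have "(H *\<^sub>v v) $ i = (\<Sum>k<n. ((if i = k then 1 else 0) - c * h $ i * h $ k) * v $ k)"
        using i v by (simp add: H_def scalar_prod_def lessThan_atLeast0)
      also have "\<dots> = (\<Sum>k<n. (if i = k then 1 else 0) * v $ k) - c * h $ i * (\<Sum>k<n. h $ k * v $ k)"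
        by (simp add: sum_subtractf sum_distrib_left algebra_simps)
      also have "\<dots> = v $ i - h $ i * (c * (h \<bullet> v))" using i unfolding hvsum by (simp add: sum_delta_l)
      also have "\<dots> = unit_vec n 0 $ i" using cs i v by (simp add: h_def)
      finally show "(H *\<^sub>v v) $ i = unit_vec n 0 $ i" .
    qed (auto simp: H_def)
    have "H\<^sup>T = H" by (rule eq_matI, auto simp: H_def)
    thus ?thesis using HH Hv by (intro exI[of _ H], auto simp: H_def)
  qed
qed

lemma mat_vec_unit: fixes A :: "real mat" assumes "A \<in> carrier_mat n m" "j < m" "i < n"
  shows "(A *\<^sub>v unit_vec m j) $ i = A $$ (i,j)"
proof -
  have "(A *\<^sub>v unit_vec m j) $ i = (\<Sum>k<m. (if k = j then 1 else 0) * A $$ (i,k))"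
    using assms by (auto simp: scalar_prod_def lessThan_atLeast0 unit_vec_def mult.commute intro!: sum.cong)
  thus ?thesis using sum_delta_r[OF assms(2), of "\<lambda>k. A $$ (i,k)"] by simp
qed

lemma self_scalar_pos: fixes x :: "real vec"
  assumes x: "x \<in> carrier_vec n" "x \<noteq> 0\<^sub>v n" shows "x \<bullet> x > 0"
proof -
  have "\<exists>i<n. x $ i \<noteq> 0"
  proof (rule ccontr)
    assume "\<not> ?thesis"
    hence "x = 0\<^sub>v n" using x by (intro eq_vecI, auto)
    with x show False by simp
  qed
  then obtain i where i: "i < n" "x $ i \<noteq> 0" by auto
  have "x \<bullet> x = (\<Sum>k<n. (x $ k)^2)" using x by (simp add: scalar_prod_def power2_eq_square lessThan_atLeast0)
  also have "\<dots> > 0" by (rule sum_pos2[of _ i], insert i, auto)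
  finally show ?thesis .
qed

lemma spectral:
  fixes M :: "real mat"
  assumes "M \<in> carrier_mat n n" and "M\<^sup>T = M"
  shows "\<exists>Q. Q \<in> carrier_mat n n \<and> Q\<^sup>T * Q = 1\<^sub>m n \<and> Q * Q\<^sup>T = 1\<^sub>m n \<and> diagonal_mat (Q\<^sup>T * M * Q)"
  using assms
proof (induction n arbitrary: M)
  case 0
  thus ?case by (intro exI[of _ "1\<^sub>m 0"], auto simp: diagonal_mat_def)
next
  case (Suc n M)
  note M = Suc.prems(1) and sym = Suc.prems(2)
  obtain r x where x: "x \<in> carrier_vec (Suc n)" "x \<noteq> 0\<^sub>v (Suc n)" and Mx: "M *\<^sub>v x = r \<cdot>\<^sub>v x"
    using real_sym_eigenvector[OF M sym] by auto
  have xx: "x \<bullet> x > 0" using self_scalar_pos[OF x] .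
  define v where "v = (1 / sqrt (x \<bullet> x)) \<cdot>\<^sub>v x"
  have v: "v \<in> carrier_vec (Suc n)" using x by (auto simp: v_def)
  have vv: "v \<bullet> v = 1" using xx x unfolding v_def
    by (auto simp: smult_scalar_prod_distrib[of _ "Suc n"] scalar_prod_smult_distrib[of _ "Suc n"] power2_eq_square[symmetric])
  have Mv: "M *\<^sub>v v = r \<cdot>\<^sub>v v" unfolding v_def using M x Mx by (auto simp: mult_mat_vec smult_smult_assoc mult.commute)
  obtain H where H: "H \<in> carrier_mat (Suc n) (Suc n)" and HT: "H\<^sup>T = H" and HH: "H * H = 1\<^sub>m (Suc n)"
    and Hv: "H *\<^sub>v v = unit_vec (Suc n) 0" using householder[OF v vv] by auto
  have He: "H *\<^sub>v unit_vec (Suc n) 0 = v"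
    using arg_cong[OF Hv, of "\<lambda>y. H *\<^sub>v y"] H v HH by (simp add: assoc_mult_mat_vec[symmetric])
  define M' where "M' = H * M * H"
  have M': "M' \<in> carrier_mat (Suc n) (Suc n)" using H M by (auto simp: M'_def)
  have "M'\<^sup>T = H\<^sup>T * (H * M)\<^sup>T" unfolding M'_def
    by (rule transpose_mult[of _ "Suc n" "Suc n"], insert H M, auto)
  also have "(H * M)\<^sup>T = M\<^sup>T * H\<^sup>T" by (rule transpose_mult[of _ "Suc n" "Suc n"], insert H M, auto)
  finally have M'T: "M'\<^sup>T = M'" unfolding M'_def using H M HT sym by simp
  have M'e: "M' *\<^sub>v unit_vec (Suc n) 0 = r \<cdot>\<^sub>v unit_vec (Suc n) 0"
  proof -
    have "M' *\<^sub>v unit_vec (Suc n) 0 = H *\<^sub>v (M *\<^sub>v (H *\<^sub>v unit_vec (Suc n) 0))"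
      unfolding M'_def using H M
      by (subst assoc_mult_mat_vec[of "H*M" "Suc n" "Suc n" H "Suc n"], auto simp del: assoc_mult_mat)
    also have "\<dots> = H *\<^sub>v (r \<cdot>\<^sub>v v)" unfolding He Mv ..
    also have "\<dots> = r \<cdot>\<^sub>v (H *\<^sub>v v)" using H v by (simp add: mult_mat_vec)
    finally show ?thesis unfolding Hv .
  qed
  have col0: "M' $$ (i,0) = (if i = 0 then r else 0)" if "i < Suc n" for i
    using mat_vec_unit[OF M' _ that, of 0] M'e that by (cases "i = 0", auto)
  have symM': "M' $$ (i,j) = M' $$ (j,i)" if "i < Suc n" "j < Suc n" for i j
    using arg_cong[OF M'T, of "\<lambda>X. X $$ (i,j)"] that M' by auto
  have row0: "M' $$ (0,j) = (if j = 0 then r else 0)" if "j < Suc n" for j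
    using col0[OF that] symM'[of 0 j] that by auto
  define A4 where "A4 = mat n n (\<lambda>(i,j). M' $$ (Suc i, Suc j))"
  have A4: "A4 \<in> carrier_mat n n" by (auto simp: A4_def)
  have A4T: "A4\<^sup>T = A4" unfolding A4_def
    by (rule eq_matI, insert symM', auto)
  have M'b: "M' = four_block_mat (mat 1 1 (\<lambda>_. r)) (0\<^sub>m 1 n) (0\<^sub>m n 1) A4"
    by (rule eq_matI, insert M' col0 row0, auto simp: A4_def)
  from Suc.IH[OF A4 A4T] obtain Q4 where Q4: "Q4 \<in> carrier_mat n n" and Q4a: "Q4\<^sup>T * Q4 = 1\<^sub>m n"
    and Q4b: "Q4 * Q4\<^sup>T = 1\<^sub>m n" and Q4d: "diagonal_mat (Q4\<^sup>T * A4 * Q4)" by auto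
  define B where "B = four_block_mat (1\<^sub>m 1) (0\<^sub>m 1 n) (0\<^sub>m n 1) Q4"
  have B: "B \<in> carrier_mat (Suc n) (Suc n)" using Q4 by (auto simp: B_def)
  have BT: "B\<^sup>T = four_block_mat (1\<^sub>m 1) (0\<^sub>m 1 n) (0\<^sub>m n 1) Q4\<^sup>T"
    unfolding B_def by (subst transpose_four_block_mat, insert Q4, auto)
  have BTB: "B\<^sup>T * B = 1\<^sub>m (Suc n)" unfolding BT unfolding B_def
    by (subst mult_four_block_mat, insert Q4, auto simp: Q4a)
  have BBT: "B * B\<^sup>T = 1\<^sub>m (Suc n)" unfolding BT unfolding B_def
    by (subst mult_four_block_mat, insert Q4, auto simp: Q4b)
  have BM'B: "B\<^sup>T * M' * B = four_block_mat (mat 1 1 (\<lambda>_. r)) (0\<^sub>m 1 n) (0\<^sub>m n 1) (Q4\<^sup>T * A4 * Q4)"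
    unfolding BT M'b unfolding B_def
    by (subst mult_four_block_mat, insert Q4 A4, auto, subst mult_four_block_mat, auto)
  define Q where "Q = H * B"
  have Q: "Q \<in> carrier_mat (Suc n) (Suc n)" using H B by (auto simp: Q_def)
  have QT: "Q\<^sup>T = B\<^sup>T * H" unfolding Q_def using H B HT by (simp add: transpose_mult[of _ "Suc n" "Suc n"])
  have "Q\<^sup>T * Q = B\<^sup>T * (H * H) * B" using H B
    by (subst QT, unfold Q_def, simp add: assoc_mult_mat[of _ "Suc n" "Suc n" _ "Suc n" _ "Suc n"])
  hence QTQ: "Q\<^sup>T * Q = 1\<^sub>m (Suc n)" using HH BTB B by simp
  have "Q * Q\<^sup>T = H * (B * B\<^sup>T) * H" using H B
    by (subst QT, unfold Q_def, simp add: assoc_mult_mat[of _ "Suc n" "Suc n" _ "Suc n" _ "Suc n"])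
  hence QQT: "Q * Q\<^sup>T = 1\<^sub>m (Suc n)" using HH BBT H by simp
  have "Q\<^sup>T * M * Q = B\<^sup>T * M' * B" using H B M
    by (subst QT, unfold Q_def M'_def, simp add: assoc_mult_mat[of _ "Suc n" "Suc n" _ "Suc n" _ "Suc n"])
  hence "Q\<^sup>T * M * Q = four_block_mat (mat 1 1 (\<lambda>_. r)) (0\<^sub>m 1 n) (0\<^sub>m n 1) (Q4\<^sup>T * A4 * Q4)"
    using BM'B by simp
  hence "diagonal_mat (Q\<^sup>T * M * Q)" using Q4d Q4 A4 unfolding diagonal_mat_def
    by auto
  thus ?case using Q QTQ QQT by blast
qed

lemma cp_diag:
  fixes E :: "real mat"
  assumes E: "E \<in> carrier_mat n n" and D: "diagonal_mat E"
  shows "char_poly E = (\<Prod>i<n. [:- E $$ (i,i), 1:])"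
proof -
  have "upper_triangular E" using D E unfolding diagonal_mat_def upper_triangular_def by auto
  from char_poly_upper_triangular[OF E this]
  have "char_poly E = prod_list (map (\<lambda>i. [:- E $$ (i,i), 1:]) [0..<n])"
    using E by (simp add: diag_mat_def o_def)
  also have "\<dots> = (\<Prod>i<n. [:- E $$ (i,i), 1:])"
    by (subst prod.distinct_set_conv_list[symmetric], auto simp: lessThan_atLeast0)
  finally show ?thesis .
qed

lemma proots_prod_lin: "proots (\<Prod>i<(n::nat). [:- d i, 1:]) = image_mset d (mset_set {..<n})"
proof (induction n)
  case 0 thus ?case by simp
next
  case (Suc n)
  have "(\<Prod>i<Suc n. [:- d i, 1:]) = [:- d n, 1:] * (\<Prod>i<n. [:- d i, 1:])" by (simp add: lessThan_Suc)
  also have "proots \<dots> = proots [:- d n, 1:] + proots (\<Prod>i<n. [:- d i, 1:])"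
    by (rule proots_mult, auto)
  finally show ?case using Suc by (simp add: lessThan_Suc)
qed

lemma filter_image_mset_gen: "filter_mset P (image_mset f M) = image_mset f (filter_mset (\<lambda>x. P (f x)) M)"
  by (induction M, auto)

lemma pdet_diag:
  assumes E: "E \<in> carrier_mat n n" and D: "diagonal_mat E"
  shows "pdet E = (\<Prod>i\<in>{i. i < n \<and> E $$ (i,i) \<noteq> 0}. E $$ (i,i))"
proof -
  have "pdet E = prod_mset (filter_mset (\<lambda>x. x \<noteq> 0) (image_mset (\<lambda>i. E $$ (i,i)) (mset_set {..<n})))"
    unfolding pdet_def cp_diag[OF E D] proots_prod_lin ..
  also have "\<dots> = prod_mset (image_mset (\<lambda>i. E $$ (i,i)) (filter_mset (\<lambda>i. E $$ (i,i) \<noteq> 0) (mset_set {..<n})))"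
    by (simp only: filter_image_mset_gen)
  also have "filter_mset (\<lambda>i. E $$ (i,i) \<noteq> 0) (mset_set {..<n}) = mset_set {i. i < n \<and> E $$ (i,i) \<noteq> 0}"
    by (subst filter_mset_mset_set, auto intro!: arg_cong[of _ _ mset_set])
  finally show ?thesis by (simp add: prod_unfold_prod_mset)
qed

lemma eig_diag:
  fixes E :: "real mat"
  assumes E: "E \<in> carrier_mat n n" and D: "diagonal_mat E"
  shows "poly (char_poly E) x = 0 \<longleftrightarrow> (\<exists>i<n. E $$ (i,i) = x)"
  unfolding cp_diag[OF E D] poly_prod by (auto simp: prod_zero_iff)


lemma orth_cp:
  fixes M Q :: "real mat"
  assumes M: "M \<in> carrier_mat n n" and Q: "Q \<in> carrier_mat n n"
    and QQ: "Q\<^sup>T * Q = 1\<^sub>m n" "Q * Q\<^sup>T = 1\<^sub>m n"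
  shows "char_poly M = char_poly (Q\<^sup>T * M * Q)"
proof (rule char_poly_similar)
  have QT: "Q\<^sup>T \<in> carrier_mat n n" using Q by auto
  have "Q * (Q\<^sup>T * M * Q) * Q\<^sup>T = (Q * Q\<^sup>T) * M * (Q * Q\<^sup>T)"
    using Q QT M by (simp add: assoc_mult_mat[of _ n n _ n _ n])
  also have "\<dots> = M" using QQ M by simp
  finally have "M = Q * (Q\<^sup>T * M * Q) * Q\<^sup>T" by simp
  thus "similar_mat M (Q\<^sup>T * M * Q)" unfolding similar_mat_def similar_mat_wit_def
    using Q QT M QQ by (intro exI[of _ Q] exI[of _ "Q\<^sup>T"], auto simp: Let_def)
qed

lemma outer_carrier[simp]: "u \<in> carrier_vec n \<Longrightarrow> outer_prod u \<in> carrier_mat n n"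
  by (auto simp: outer_prod_def)

lemma outer_index[simp]: "i < dim_vec u \<Longrightarrow> j < dim_vec u \<Longrightarrow> outer_prod u $$ (i,j) = u $ i * u $ j"
  by (auto simp: outer_prod_def)

lemma outer_dims[simp]: "dim_row (outer_prod u) = dim_vec u" "dim_col (outer_prod u) = dim_vec u"
  by (auto simp: outer_prod_def)

lemma outer_conj:
  fixes P :: "real mat"
  assumes P: "P \<in> carrier_mat n n" and u: "u \<in> carrier_vec n"
  shows "P\<^sup>T * outer_prod u * P = outer_prod (P\<^sup>T *\<^sub>v u)"
proof (rule eq_matI)
  fix i j assume "i < dim_row (outer_prod (P\<^sup>T *\<^sub>v u))" "j < dim_col (outer_prod (P\<^sup>T *\<^sub>v u))"
  hence i: "i < n" and j: "j < n" using P by auto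
  have "(P\<^sup>T * outer_prod u * P) $$ (i,j) = (\<Sum>l<n. (\<Sum>k<n. P $$ (k,i) * (u $ k * u $ l)) * P $$ (l,j))"
    using P u i j by (simp add: scalar_prod_def lessThan_atLeast0)
  also have "\<dots> = (\<Sum>k<n. P $$ (k,i) * u $ k) * (\<Sum>l<n. P $$ (l,j) * u $ l)"
    by (simp add: sum_distrib_left sum_distrib_right mult_ac)
  also have "\<dots> = outer_prod (P\<^sup>T *\<^sub>v u) $$ (i,j)"
    using P u i j by (simp add: scalar_prod_def lessThan_atLeast0)
  finally show "(P\<^sup>T * outer_prod u * P) $$ (i,j) = outer_prod (P\<^sup>T *\<^sub>v u) $$ (i,j)" .
qed (use P u in auto)

lemma det_one_minus_outer:
  fixes z :: "real vec"
  assumes z: "z \<in> carrier_vec n"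
  shows "det (1\<^sub>m n - outer_prod z) = 1 - z \<bullet> z"
proof (cases "z = 0\<^sub>v n")
  case True
  have "1\<^sub>m n - outer_prod z = 1\<^sub>m n" using True by (intro eq_matI, auto)
  thus ?thesis using True by simp
next
  case False
  have n: "n > 0" using False z by (cases n, auto)
  define t where "t = z \<bullet> z"
  have t: "t > 0" using self_scalar_pos[OF z False] by (simp add: t_def)
  define v where "v = (1 / sqrt t) \<cdot>\<^sub>v z"
  have v: "v \<in> carrier_vec n" using z by (auto simp: v_def)
  have vv: "v \<bullet> v = 1" using t z unfolding v_def t_def
    by (auto simp: smult_scalar_prod_distrib[of _ n] scalar_prod_smult_distrib[of _ n] power2_eq_square[symmetric])
  obtain H where H: "H \<in> carrier_mat n n" and HT: "H\<^sup>T = H" and HH: "H * H = 1\<^sub>m n"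
    and Hv: "H *\<^sub>v v = unit_vec n 0" using householder[OF v vv n] by auto
  have zv: "z = sqrt t \<cdot>\<^sub>v v" using t z by (auto simp: v_def smult_smult_assoc)
  have Hz: "H\<^sup>T *\<^sub>v z = sqrt t \<cdot>\<^sub>v unit_vec n 0" unfolding HT zv using H v by (simp add: mult_mat_vec Hv)
  define F where "F = 1\<^sub>m n - outer_prod z"
  have F: "F \<in> carrier_mat n n" using z by (auto simp: F_def)
  have "H\<^sup>T * F * H = H\<^sup>T * (1\<^sub>m n) * H - H\<^sup>T * outer_prod z * H" unfolding F_def using H z
    by (subst mult_minus_distrib_mat[of _ n n _ n], auto, subst minus_mult_distrib_mat[of _ n n _ _ n], auto)
  also have "\<dots> = 1\<^sub>m n - outer_prod (sqrt t \<cdot>\<^sub>v unit_vec n 0)"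
    unfolding outer_conj[OF H z] Hz using H HT HH by simp
  finally have HFH: "H\<^sup>T * F * H = 1\<^sub>m n - outer_prod (sqrt t \<cdot>\<^sub>v unit_vec n 0)" .
  have dH: "det H * det H = 1" using det_mult[OF H H] HH by simp
  have "det (H\<^sup>T * F * H) = det H * det F * det H"
    using H F by (simp add: det_mult[of _ n] det_transpose HT)
  hence "det F = det (1\<^sub>m n - outer_prod (sqrt t \<cdot>\<^sub>v unit_vec n 0))" using HFH dH
    by (metis mult.commute mult.left_neutral mult.assoc)
  also have "\<dots> = (\<Prod>i<n. (1\<^sub>m n - outer_prod (sqrt t \<cdot>\<^sub>v unit_vec n 0)) $$ (i,i))"
  proof -
    let ?G = "1\<^sub>m n - outer_prod (sqrt t \<cdot>\<^sub>v unit_vec n 0)"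
    have G: "?G \<in> carrier_mat n n" by auto
    have "upper_triangular ?G" unfolding upper_triangular_def by auto
    from det_upper_triangular[OF this G]
    show ?thesis using G by (simp add: diag_mat_def prod.distinct_set_conv_list[symmetric] lessThan_atLeast0)
  qed
  also have "\<dots> = (\<Prod>i<n. if i = 0 then 1 - t else 1)"
    by (rule prod.cong, insert t, auto)
  also have "\<dots> = 1 - t" using n by (simp add: prod.delta)
  finally show ?thesis unfolding F_def t_def .
qed

lemma sum_two_delta: "i < (n::nat) \<Longrightarrow> (\<Sum>k<n. (if k = i then a else 0) * (if k = j then b else 0)) = (if i = j then a * b else (0::real))"
proof -
  assume i: "i < n"
  have "(\<Sum>k<n. (if k = i then a else 0) * (if k = j then b else 0)) = (\<Sum>k<n. if k = i then (if i = j then a * b else 0) else 0)"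
    by (rule sum.cong, auto)
  thus ?thesis using i by simp
qed

lemma det_diag_minus_outer:
  fixes D :: "real mat"
  assumes D: "D \<in> carrier_mat n n" and Dd: "diagonal_mat D" and w: "w \<in> carrier_vec n"
    and x: "\<And>i. i < n \<Longrightarrow> D $$ (i,i) < x"
  shows "poly (char_poly (D + outer_prod w)) x = (\<Prod>i<n. x - D $$ (i,i)) * (1 - (\<Sum>i<n. (w $ i)^2 / (x - D $$ (i,i))))"
proof -
  define s where "s i = sqrt (x - D $$ (i,i))" for i
  have s: "i < n \<Longrightarrow> s i > 0" for i using x[of i] by (auto simp: s_def)
  have ss: "i < n \<Longrightarrow> s i * s i = x - D $$ (i,i)" for i using x[of i] by (auto simp: s_def)
  define S where "S = mat n n (\<lambda>(i,j). if i = j then s i else 0)"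
  have S: "S \<in> carrier_mat n n" by (auto simp: S_def)
  define z where "z = vec n (\<lambda>i. w $ i / s i)"
  have z: "z \<in> carrier_vec n" by (auto simp: z_def)
  have Sz: "S\<^sup>T *\<^sub>v z = w"
  proof (rule eq_vecI)
    fix i assume "i < dim_vec w" hence i: "i < n" using w by auto
    have "(S\<^sup>T *\<^sub>v z) $ i = (\<Sum>k<n. (if k = i then 1 else 0) * (s k * (w $ k / s k)))"
      using i by (auto simp: S_def z_def scalar_prod_def lessThan_atLeast0 intro!: sum.cong)
    also have "\<dots> = w $ i" using sum_delta_r[OF i] s[OF i] by simp
    finally show "(S\<^sup>T *\<^sub>v z) $ i = w $ i" .
  qed (use w S in auto)
  have M: "- char_matrix (D + outer_prod w) x = S\<^sup>T * (1\<^sub>m n - outer_prod z) * S"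
  proof -
    have "S\<^sup>T * (1\<^sub>m n - outer_prod z) * S = S\<^sup>T * S - S\<^sup>T * outer_prod z * S" using S z
      by (subst mult_minus_distrib_mat[of _ n n _ n], auto, subst minus_mult_distrib_mat[of _ n n _ _ n], auto)
    also have "S\<^sup>T * outer_prod z * S = outer_prod w" unfolding outer_conj[OF S z] Sz ..
    finally have eq: "S\<^sup>T * (1\<^sub>m n - outer_prod z) * S = S\<^sup>T * S - outer_prod w" .
    show ?thesis unfolding eq
    proof (rule eq_matI)
      fix i j assume "i < dim_row (S\<^sup>T * S - outer_prod w)" "j < dim_col (S\<^sup>T * S - outer_prod w)"
      hence i: "i < n" and j: "j < n" using S w by auto
      have "(S\<^sup>T * S) $$ (i,j) = (\<Sum>k<n. (if k = i then s i else 0) * (if k = j then s j else 0))"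
        using i j by (auto simp: S_def scalar_prod_def lessThan_atLeast0 intro!: sum.cong)
      also have "\<dots> = (if i = j then x - D $$ (i,i) else 0)" unfolding sum_two_delta[OF i] using ss[OF i] by auto
      finally have "(S\<^sup>T * S) $$ (i,j) = (if i = j then x - D $$ (i,i) else 0)" .
      moreover have "D $$ (i,j) = 0" if "i \<noteq> j" using Dd that i j D unfolding diagonal_mat_def by auto
      ultimately show "(- char_matrix (D + outer_prod w) x) $$ (i,j) = (S\<^sup>T * S - outer_prod w) $$ (i,j)"
        using i j D w by (auto simp: char_matrix_def)
    qed (use D w S in \<open>auto simp: char_matrix_def\<close>)
  qed
  have "poly (char_poly (D + outer_prod w)) x = det (S\<^sup>T * (1\<^sub>m n - outer_prod z) * S)"
    unfolding M[symmetric] by (rule char_poly_matrix[of _ n], use D w in auto)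
  also have "\<dots> = det S * det (1\<^sub>m n - outer_prod z) * det S"
  proof -
    have F: "1\<^sub>m n - outer_prod z \<in> carrier_mat n n" using z by auto
    have ST: "S\<^sup>T \<in> carrier_mat n n" using S by auto
    show ?thesis
      unfolding det_mult[OF mult_carrier_mat[OF ST F] S] det_mult[OF ST F] det_transpose[OF S] ..
  qed
  also have "det S = (\<Prod>i<n. s i)"
  proof -
    have "upper_triangular S" unfolding upper_triangular_def S_def by auto
    from det_upper_triangular[OF this S]
    show ?thesis using S by (simp add: diag_mat_def prod.distinct_set_conv_list[symmetric] lessThan_atLeast0 S_def)
  qed
  also have "det (1\<^sub>m n - outer_prod z) = 1 - z \<bullet> z" by (rule det_one_minus_outer[OF z])
  also have "z \<bullet> z = (\<Sum>i<n. (w $ i)^2 / (x - D $$ (i,i)))"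
    unfolding scalar_prod_def using z by (auto simp: z_def lessThan_atLeast0 power2_eq_square ss[symmetric] intro!: sum.cong)
  also have "(\<Prod>i<n. s i) * (1 - (\<Sum>i<n. (w $ i)^2 / (x - D $$ (i,i)))) * (\<Prod>i<n. s i)
     = (\<Prod>i<n. s i * s i) * (1 - (\<Sum>i<n. (w $ i)^2 / (x - D $$ (i,i))))"
    by (simp add: prod.distrib)
  also have "(\<Prod>i<n. s i * s i) = (\<Prod>i<n. x - D $$ (i,i))" by (rule prod.cong, auto simp: ss)
  finally show ?thesis .
qed

lemma poly_eq_on_Ioi:
  fixes p q :: "real poly"
  assumes "\<And>x. x > b \<Longrightarrow> poly p x = poly q x"
  shows "p = q"
proof (rule ccontr)
  assume "p \<noteq> q"
  hence "p - q \<noteq> 0" by simp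
  from poly_roots_finite[OF this] have "finite {x. poly (p - q) x = 0}" .
  moreover have "{b<..} \<subseteq> {x. poly (p - q) x = 0}" using assms by auto
  ultimately show False using infinite_Ioi[of b] finite_subset by blast
qed

lemma monom_cancel:
  fixes E h :: "real poly"
  assumes eq: "[:0,1:]^a * E = [:0,1:]^b * h" and E0: "poly E 0 \<noteq> 0" and h0: "poly h 0 \<noteq> 0"
  shows "a = b \<and> E = h"
proof -
  have X: "[:0,1:]^k \<noteq> (0 :: real poly)" for k by simp
  {
    fix a b :: nat and E h :: "real poly"
    assume eq: "[:0,1:]^a * E = [:0,1:]^b * h" and E0: "poly E 0 \<noteq> 0" and ab: "a \<le> b"
    have "[:0,1:]^a * E = [:0,1:]^a * ([:0,1:]^(b-a) * h)"
      using eq ab by (simp add: power_add[symmetric] mult.assoc[symmetric])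
    hence Eh: "E = [:0,1:]^(b-a) * h" using X[of a] by simp
    have "a = b"
    proof (rule ccontr)
      assume "a \<noteq> b" hence "b - a > 0" using ab by simp
      hence "poly E 0 = 0" unfolding Eh by (simp add: poly_power)
      thus False using E0 by simp
    qed
    hence "a = b \<and> E = h" using Eh by simp
  } note main = this
  show ?thesis
  proof (cases "a \<le> b")
    case True thus ?thesis using main[OF eq E0] by simp
  next
    case False thus ?thesis using main[OF eq[symmetric] h0] by simp
  qed
qed

lemma poly_part:
  fixes d e wsq :: "nat \<Rightarrow> real" and b :: real
  assumes eq: "\<And>x. x > b \<Longrightarrow> (\<Prod>k<n. x - e k) = (\<Prod>i<n. x - d i) * (1 - (\<Sum>i<n. wsq i / (x - d i)))"
    and b: "b \<ge> 0" "\<And>i. i < n \<Longrightarrow> d i \<le> b"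
    and Z: "\<exists>i<n. d i = 0"
    and c0: "(\<Sum>i\<in>{i. i < n \<and> d i = 0}. wsq i) \<noteq> 0"
  shows "(\<Prod>k\<in>{k. k < n \<and> e k \<noteq> 0}. e k) = (\<Sum>i\<in>{i. i < n \<and> d i = 0}. wsq i) * (\<Prod>i\<in>{i. i < n \<and> d i \<noteq> 0}. d i)"
proof -
  define Z where "Z = {i. i < n \<and> d i = 0}"
  define N where "N = {i. i < n \<and> d i \<noteq> 0}"
  define ZE where "ZE = {k. k < n \<and> e k = 0}"
  define NE where "NE = {k. k < n \<and> e k \<noteq> 0}"
  define c where "c = (\<Sum>i\<in>Z. wsq i)"
  define m where "m = card Z"
  have fin: "finite Z" "finite N" "finite ZE" "finite NE" by (auto simp: Z_def N_def ZE_def NE_def)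
  have split: "{..<n} = Z \<union> N" "Z \<inter> N = {}" "{..<n} = ZE \<union> NE" "ZE \<inter> NE = {}"
    by (auto simp: Z_def N_def ZE_def NE_def)
  have m: "m \<ge> 1" using Z fin unfolding m_def Z_def
    by (metis (mono_tags, lifting) One_nat_def Suc_leI card_gt_0_iff empty_iff mem_Collect_eq)
  have cZN: "card Z + card N = n"
  proof -
    have "card (Z \<union> N) = n" using split(1) by (metis card_lessThan)
    thus ?thesis using card_Un_disjoint[OF fin(1,2) split(2)] by simp
  qed
  have cZNE: "card ZE + card NE = n"
  proof -
    have "card (ZE \<union> NE) = n" using split(3) by (metis card_lessThan)
    thus ?thesis using card_Un_disjoint[OF fin(3,4) split(4)] by simp
  qed
  define PN where "PN = (\<Prod>j\<in>N. [:- d j, 1:])"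
  define hp where "hp = [:0,1:] * PN - [:c:] * PN - [:0,1:] * (\<Sum>i\<in>N. [:wsq i:] * (\<Prod>j\<in>N - {i}. [:- d j, 1:]))"
  define Ep where "Ep = (\<Prod>k\<in>NE. [:- e k, 1:])"
  have polyeq: "[:0,1:]^(card ZE) * Ep = [:0,1:]^(m-1) * hp"
  proof (rule poly_eq_on_Ioi[of b])
    fix x :: real assume x: "x > b"
    have x0: "x > 0" using x b by simp
    have xd: "i \<in> N \<Longrightarrow> x - d i \<noteq> 0" for i using x b(2)[of i] by (auto simp: N_def)
    have "poly ([:0,1:]^(card ZE) * Ep) x = x ^ card ZE * (\<Prod>k\<in>NE. x - e k)"
      by (simp add: Ep_def poly_prod poly_power)
    also have "x ^ card ZE = (\<Prod>k\<in>ZE. x - e k)" by (simp add: ZE_def)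
    also have "(\<Prod>k\<in>ZE. x - e k) * (\<Prod>k\<in>NE. x - e k) = (\<Prod>k<n. x - e k)"
      unfolding split(3) by (rule prod.union_disjoint[symmetric], insert fin split, auto)
    also have "\<dots> = (\<Prod>i<n. x - d i) * (1 - (\<Sum>i<n. wsq i / (x - d i)))" using eq[OF x] .
    also have "(\<Prod>i<n. x - d i) = x ^ m * poly PN x"
      unfolding split(1) prod.union_disjoint[OF fin(1,2) split(2)]
      by (simp add: PN_def poly_prod m_def Z_def)
    also have "(\<Sum>i<n. wsq i / (x - d i)) = c / x + (\<Sum>i\<in>N. wsq i / (x - d i))"
      unfolding split(1) sum.union_disjoint[OF fin(1,2) split(2)]
      by (simp add: c_def sum_divide_distrib Z_def)
    also have "x ^ m * poly PN x * (1 - (c / x + (\<Sum>i\<in>N. wsq i / (x - d i))))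
       = x ^ (m - 1) * (x * poly PN x - c * poly PN x - x * (\<Sum>i\<in>N. wsq i / (x - d i) * poly PN x))"
    proof -
      have "x ^ m = x ^ (m - 1) * x" using m by (metis Suc_diff_le diff_Suc_1 power_Suc2)
      thus ?thesis using x0 by (simp add: field_simps sum_distrib_left sum_distrib_right)
    qed
    also have "(\<Sum>i\<in>N. wsq i / (x - d i) * poly PN x) = (\<Sum>i\<in>N. wsq i * (\<Prod>j\<in>N - {i}. x - d j))"
    proof (rule sum.cong[OF refl])
      fix i assume i: "i \<in> N"
      have "poly PN x = (x - d i) * (\<Prod>j\<in>N - {i}. x - d j)"
        unfolding PN_def poly_prod using i fin by (simp add: prod.remove)
      thus "wsq i / (x - d i) * poly PN x = wsq i * (\<Prod>j\<in>N - {i}. x - d j)" using xd[OF i] by simp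
    qed
    also have "x ^ (m - 1) * (x * poly PN x - c * poly PN x - x * (\<Sum>i\<in>N. wsq i * (\<Prod>j\<in>N - {i}. x - d j)))
      = poly ([:0,1:]^(m-1) * hp) x"
      by (simp add: hp_def poly_power poly_sum poly_prod)
    finally show "poly ([:0,1:]^(card ZE) * Ep) x = poly ([:0,1:]^(m-1) * hp) x" .
  qed
  have Ep0: "poly Ep 0 = (-1) ^ card NE * (\<Prod>k\<in>NE. e k)"
    by (simp add: Ep_def poly_prod prod_uminus)
  have PN0: "poly PN 0 = (-1) ^ card N * (\<Prod>j\<in>N. d j)"
    by (simp add: PN_def poly_prod prod_uminus)
  have hp0: "poly hp 0 = - c * poly PN 0" by (simp add: hp_def)
  have nzE: "(\<Prod>k\<in>NE. e k) \<noteq> 0" using fin by (auto simp: NE_def)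
  have nzD: "(\<Prod>j\<in>N. d j) \<noteq> 0" using fin by (auto simp: N_def)
  have c0': "c \<noteq> 0" using c0 by (simp add: c_def Z_def)
  from monom_cancel[OF polyeq] have "card ZE = m - 1 \<and> Ep = hp"
    using nzE nzD c0' Ep0 hp0 PN0 by auto
  hence cz: "card ZE = m - 1" and "poly Ep 0 = poly hp 0" by auto
  hence "(-1) ^ card NE * (\<Prod>k\<in>NE. e k) = - c * ((-1) ^ card N * (\<Prod>j\<in>N. d j))"
    using Ep0 hp0 PN0 by simp
  moreover have "card NE = Suc (card N)" using cZN cZNE cz m unfolding m_def by linarith
  ultimately have "(\<Prod>k\<in>NE. e k) = c * (\<Prod>j\<in>N. d j)" by simp
  thus ?thesis unfolding NE_def c_def Z_def N_def .
qed

lemma diag_mult_vec: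
  fixes D :: "real mat"
  assumes D: "D \<in> carrier_mat n n" and Dd: "diagonal_mat D" and v: "v \<in> carrier_vec n" and i: "i < n"
  shows "(D *\<^sub>v v) $ i = D $$ (i,i) * v $ i"
proof -
  have "(D *\<^sub>v v) $ i = (\<Sum>k<n. (if k = i then 1 else 0) * (D $$ (i,k) * v $ k))"
    using D v i Dd unfolding diagonal_mat_def
    by (auto simp: scalar_prod_def lessThan_atLeast0 intro!: sum.cong)
  thus ?thesis using sum_delta_r[OF i] by simp
qed

lemma lmin_cp: "A \<in> carrier_mat n n \<Longrightarrow> lambda_min_nz A = Min {x. poly (char_poly A) x = 0 \<and> x \<noteq> 0}"
  unfolding lambda_min_nz_def using eigenvalue_root_char_poly[of A n] by simp

theorem mainTheorem7:
  fixes n :: nat and A :: "real mat" and u :: "real vec"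
  assumes "psd_mat n A"
    and "u \<in> carrier_vec n"
    and "\<exists>y \<in> mat_kernel A. u \<bullet> y \<noteq> 0"
  shows "pdet (A + outer_prod u) \<ge> lambda_min_nz (A + outer_prod u) * pdet A"
proof -
  have A: "A \<in> carrier_mat n n" and AT: "A\<^sup>T = A" and psd: "\<And>v. v \<in> carrier_vec n \<Longrightarrow> 0 \<le> v \<bullet> (A *\<^sub>v v)"
    using assms(1) unfolding psd_mat_def by auto
  have u: "u \<in> carrier_vec n" by fact
  obtain y where y: "y \<in> carrier_vec n" and Ay: "A *\<^sub>v y = 0\<^sub>v n" and uy: "u \<bullet> y \<noteq> 0"
    using assms(3) A unfolding mat_kernel_def by auto
  obtain Q where Q: "Q \<in> carrier_mat n n" and QTQ: "Q\<^sup>T * Q = 1\<^sub>m n" and QQT: "Q * Q\<^sup>T = 1\<^sub>m n"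
    and Dd: "diagonal_mat (Q\<^sup>T * A * Q)" using spectral[OF A AT] by auto
  have QT: "Q\<^sup>T \<in> carrier_mat n n" using Q by auto
  define D where "D = Q\<^sup>T * A * Q"
  have D: "D \<in> carrier_mat n n" using Q A by (auto simp: D_def)
  have Dd: "diagonal_mat D" using Dd by (simp add: D_def)
  define d where "d i = D $$ (i,i)" for i
  have dnn: "d i \<ge> 0" if i: "i < n" for i
  proof -
    have "D = Q\<^sup>T * (A * Q)" unfolding D_def using Q A by simp
    hence "d i = col Q i \<bullet> (A *\<^sub>v col Q i)" unfolding d_def using i Q A by (simp add: mult_mat_vec_def)
    thus ?thesis using psd[of "col Q i"] Q i by auto
  qed
  define w where "w = Q\<^sup>T *\<^sub>v u"
  have w: "w \<in> carrier_vec n" using Q u by (auto simp: w_def)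
  define B' where "B' = D + outer_prod w"
  have B': "B' \<in> carrier_mat n n" using D w by (auto simp: B'_def)
  have "Q\<^sup>T * (A + outer_prod u) * Q = B'"
  proof -
    have "Q\<^sup>T * (A + outer_prod u) = Q\<^sup>T * A + Q\<^sup>T * outer_prod u"
      by (rule mult_add_distrib_mat[of _ n n _ n], use QT A u in auto)
    moreover have "(Q\<^sup>T * A + Q\<^sup>T * outer_prod u) * Q = Q\<^sup>T * A * Q + Q\<^sup>T * outer_prod u * Q"
      by (rule add_mult_distrib_mat[of _ n n _ _ n], use QT A u Q in auto)
    ultimately show ?thesis unfolding B'_def D_def outer_conj[OF Q u] w_def by simp
  qed
  hence cpB: "char_poly (A + outer_prod u) = char_poly B'"
    using orth_cp[OF _ Q QTQ QQT, of "A + outer_prod u"] A u by simp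
  have cpA: "char_poly A = char_poly D" using orth_cp[OF A Q QTQ QQT] by (simp add: D_def)
  have B'T: "B'\<^sup>T = B'"
  proof (rule eq_matI)
    fix i j assume "i < dim_row B'" "j < dim_col B'"
    hence i: "i < n" and j: "j < n" using B' by auto
    have "D $$ (j,i) = D $$ (i,j)" using Dd D i j unfolding diagonal_mat_def by (cases "i = j", auto)
    thus "B'\<^sup>T $$ (i,j) = B' $$ (i,j)" using i j D w by (simp add: B'_def)
  qed (use B' in auto)
  obtain R where R: "R \<in> carrier_mat n n" and RTR: "R\<^sup>T * R = 1\<^sub>m n" and RRT: "R * R\<^sup>T = 1\<^sub>m n"
    and Ed: "diagonal_mat (R\<^sup>T * B' * R)" using spectral[OF B' B'T] by auto
  define E where "E = R\<^sup>T * B' * R"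
  have E: "E \<in> carrier_mat n n" using R B' by (auto simp: E_def)
  have Ed: "diagonal_mat E" using Ed by (simp add: E_def)
  define e where "e k = E $$ (k,k)" for k
  have cpB': "char_poly B' = char_poly E" using orth_cp[OF B' R RTR RRT] by (simp add: E_def)
  have pdetB: "pdet (A + outer_prod u) = (\<Prod>k\<in>{k. k < n \<and> e k \<noteq> 0}. e k)"
    using pdet_diag[OF E Ed] unfolding pdet_def cpB cpB' e_def .
  have pdetA: "pdet A = (\<Prod>i\<in>{i. i < n \<and> d i \<noteq> 0}. d i)"
    using pdet_diag[OF D Dd] unfolding pdet_def cpA d_def .
  define S where "S = {x. (\<exists>k<n. e k = x) \<and> x \<noteq> 0}"
  have lmin: "lambda_min_nz (A + outer_prod u) = Min S"
  proof -
    have "lambda_min_nz (A + outer_prod u) = Min {x. poly (char_poly (A + outer_prod u)) x = 0 \<and> x \<noteq> 0}"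
      by (rule lmin_cp[of _ n], use A u in auto)
    thus ?thesis unfolding cpB cpB' eig_diag[OF E Ed] S_def e_def .
  qed
  define c where "c = (\<Sum>i\<in>{i. i < n \<and> d i = 0}. (w $ i)^2)"
  have "\<exists>i<n. d i = 0 \<and> w $ i \<noteq> 0"
  proof (rule ccontr)
    assume nex: "\<not> ?thesis"
    define y' where "y' = Q\<^sup>T *\<^sub>v y"
    have y': "y' \<in> carrier_vec n" using Q y by (auto simp: y'_def)
    have QQy: "Q *\<^sub>v y' = y" unfolding y'_def using Q QT y
      by (simp add: assoc_mult_mat_vec[symmetric, of Q n n "Q\<^sup>T" n] QQT)
    have "D *\<^sub>v y' = Q\<^sup>T *\<^sub>v (A *\<^sub>v (Q *\<^sub>v y'))" unfolding D_def using QT A Q y'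
      by (simp add: assoc_mult_mat_vec[of _ n n _ n])
    also have "\<dots> = 0\<^sub>v n" unfolding QQy Ay using QT by (intro eq_vecI, auto)
    finally have Dy: "D *\<^sub>v y' = 0\<^sub>v n" .
    have yi: "y' $ i = 0" if "i < n" "d i \<noteq> 0" for i
      using arg_cong[OF Dy, of "\<lambda>v. v $ i"] diag_mult_vec[OF D Dd y' that(1)] that by (simp add: d_def)
    have "w \<bullet> y' = u \<bullet> (Q *\<^sub>v y')" unfolding w_def by (rule transpose_vec_mult_scalar[OF Q y' u])
    hence "w \<bullet> y' = u \<bullet> y" using QQy by simp
    moreover have "w \<bullet> y' = 0" unfolding scalar_prod_def using y' nex yi
      by (auto intro!: sum.neutral) (metis)
    ultimately show False using uy by simp
  qed
  then obtain i0 where i0: "i0 < n" "d i0 = 0" "w $ i0 \<noteq> 0" by auto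
  have cpos: "c > 0" unfolding c_def by (rule sum_pos2[of _ i0], insert i0, auto)
  have M1: "(\<Prod>k\<in>{k. k < n \<and> e k \<noteq> 0}. e k) = c * (\<Prod>i\<in>{i. i < n \<and> d i \<noteq> 0}. d i)"
    unfolding c_def
  proof (rule poly_part)
    define b where "b = (\<Sum>i<n. d i)"
    show b0: "b \<ge> 0" unfolding b_def using dnn by (auto intro: sum_nonneg)
    show bd: "d i \<le> b" if "i < n" for i unfolding b_def
      by (rule member_le_sum, insert that dnn, auto)
    show "\<exists>i<n. d i = 0" using i0 by auto
    show "(\<Sum>i\<in>{i. i < n \<and> d i = 0}. (w $ i)^2) \<noteq> 0" using cpos unfolding c_def by simp
    fix x assume x: "x > b"
    have "(\<Prod>k<n. x - e k) = poly (char_poly E) x"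
      unfolding cp_diag[OF E Ed] poly_prod e_def by simp
    also have "\<dots> = poly (char_poly B') x" unfolding cpB' ..
    also have "\<dots> = (\<Prod>i<n. x - D $$ (i,i)) * (1 - (\<Sum>i<n. (w $ i)^2 / (x - D $$ (i,i))))"
      unfolding B'_def by (rule det_diag_minus_outer[OF D Dd w], insert bd x, auto simp: d_def, fastforce)
    finally show "(\<Prod>k<n. x - e k) = (\<Prod>i<n. x - d i) * (1 - (\<Sum>i<n. (w $ i)^2 / (x - d i)))"
      unfolding d_def .
  qed
  have M2: "Min S \<le> c"
  proof -
    define z where "z = vec n (\<lambda>i. if d i = 0 then w $ i else 0)"
    have z: "z \<in> carrier_vec n" by (auto simp: z_def)
    have cz: "c = (\<Sum>i<n. z $ i * w $ i)"
    proof -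
      have "{i. i < n \<and> d i = 0} = {i \<in> {..<n}. d i = 0}" by auto
      hence "c = (\<Sum>i<n. if d i = 0 then (w $ i)^2 else 0)" unfolding c_def
        using sum.inter_filter[of "{..<n}" "\<lambda>i. (w $ i)^2" "\<lambda>i. d i = 0"] by simp
      also have "\<dots> = (\<Sum>i<n. z $ i * w $ i)" by (rule sum.cong, auto simp: z_def power2_eq_square)
      finally show ?thesis .
    qed
    have zz: "z \<bullet> z = c" unfolding cz scalar_prod_def using z
      by (auto simp: z_def lessThan_atLeast0 intro!: sum.cong)
    have Bsplit: "B' *\<^sub>v v = D *\<^sub>v v + outer_prod w *\<^sub>v v" if "v \<in> carrier_vec n" for v
      unfolding B'_def by (rule add_mult_distrib_mat_vec, use D w that in auto)
    have Ov: "(outer_prod w *\<^sub>v v) $ i = w $ i * (w \<bullet> v)" if "v \<in> carrier_vec n" "i < n" for v i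
      using that w by (auto simp: scalar_prod_def sum_distrib_left mult.assoc intro!: sum.cong)
    have Bz: "(B' *\<^sub>v z) $ i = w $ i * c" if i: "i < n" for i
    proof -
      have "(D *\<^sub>v z) $ i = 0" using diag_mult_vec[OF D Dd z i] by (auto simp: z_def d_def i)
      moreover have "w \<bullet> z = c" unfolding cz scalar_prod_def using z by (auto simp: lessThan_atLeast0 mult.commute)
      ultimately show ?thesis unfolding Bsplit[OF z] using Ov[OF z i] i D z w by simp
    qed
    have zBz: "z \<bullet> (B' *\<^sub>v z) = c * c"
    proof -
      have "z \<bullet> (B' *\<^sub>v z) = (\<Sum>i<n. z $ i * (B' *\<^sub>v z) $ i)" unfolding scalar_prod_def using z B'
        by (simp add: lessThan_atLeast0 del: index_mult_mat_vec)
      also have "\<dots> = (\<Sum>i<n. z $ i * (w $ i * c))" by (rule sum.cong, auto simp: Bz)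
      also have "\<dots> = c * c" unfolding cz by (simp add: sum_distrib_right mult_ac)
      finally show ?thesis .
    qed
    have RT: "R\<^sup>T \<in> carrier_mat n n" using R by auto
    have B'R: "B' = R * E * R\<^sup>T"
    proof -
      have "R * E * R\<^sup>T = (R * R\<^sup>T) * B' * (R * R\<^sup>T)" unfolding E_def using R RT B'
        by (simp add: assoc_mult_mat[of _ n n _ n _ n])
      thus ?thesis using RRT B' by simp
    qed
    have B'v: "B' *\<^sub>v v = R *\<^sub>v (E *\<^sub>v (R\<^sup>T *\<^sub>v v))" if "v \<in> carrier_vec n" for v
      unfolding B'R using R RT E that by (simp add: assoc_mult_mat_vec[of _ n n _ n])
    define Y where "Y = R\<^sup>T *\<^sub>v z"
    have Y: "Y \<in> carrier_vec n" using RT z by (auto simp: Y_def)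
    have RTvec: "(R\<^sup>T *\<^sub>v v) \<bullet> x = v \<bullet> (R *\<^sub>v x)" if "v \<in> carrier_vec n" "x \<in> carrier_vec n" for v x
      by (rule transpose_vec_mult_scalar[OF R that(2,1)])
    have RRTv: "R *\<^sub>v (R\<^sup>T *\<^sub>v v) = v" if "v \<in> carrier_vec n" for v
      using R RT that by (simp add: assoc_mult_mat_vec[symmetric, of R n n "R\<^sup>T" n] RRT)
    have RTRv: "R\<^sup>T *\<^sub>v (R *\<^sub>v v) = v" if "v \<in> carrier_vec n" for v
      using R RT that by (simp add: assoc_mult_mat_vec[symmetric, of "R\<^sup>T" n n R n] RTR)
    have YY: "Y \<bullet> Y = c" unfolding Y_def using RTvec[OF z, of "R\<^sup>T *\<^sub>v z"] RRTv[OF z] RT z zz by simp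
    have "z \<bullet> (B' *\<^sub>v z) = Y \<bullet> (E *\<^sub>v Y)" unfolding B'v[OF z] Y_def
      using RTvec[OF z, of "E *\<^sub>v (R\<^sup>T *\<^sub>v z)"] E RT z by simp
    also have "\<dots> = (\<Sum>k<n. Y $ k * (E *\<^sub>v Y) $ k)" unfolding scalar_prod_def using Y E
      by (simp add: lessThan_atLeast0 del: index_mult_mat_vec)
    also have "\<dots> = (\<Sum>k<n. e k * (Y $ k)^2)"
      by (rule sum.cong, auto simp: diag_mult_vec[OF E Ed Y] e_def power2_eq_square)
    finally have eY: "c * c = (\<Sum>k<n. e k * (Y $ k)^2)" using zBz by simp
    have Y0: "Y $ k = 0" if k: "k < n" "e k = 0" for k
    proof -
      define r where "r = R *\<^sub>v unit_vec n k"
      have r: "r \<in> carrier_vec n" using R by (auto simp: r_def)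
      have "E *\<^sub>v unit_vec n k = 0\<^sub>v n"
      proof (rule eq_vecI)
        fix i assume "i < dim_vec (0\<^sub>v n)" hence i: "i < n" by simp
        have "(E *\<^sub>v unit_vec n k) $ i = E $$ (i,i) * unit_vec n k $ i"
          by (rule diag_mult_vec[OF E Ed unit_vec_carrier i])
        thus "(E *\<^sub>v unit_vec n k) $ i = 0\<^sub>v n $ i" using k i by (cases "i = k", auto simp: e_def)
      qed (use E in auto)
      hence Br: "B' *\<^sub>v r = 0\<^sub>v n" unfolding B'v[OF r] unfolding r_def RTRv[OF unit_vec_carrier] using R
        by (intro eq_vecI, auto)
      have Dr: "(D *\<^sub>v r) $ i = d i * r $ i" if "i < n" for i using diag_mult_vec[OF D Dd r that] by (simp add: d_def)
      have "0 = r \<bullet> (B' *\<^sub>v r)" unfolding Br using r by simp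
      also have "\<dots> = (\<Sum>i<n. d i * (r $ i)^2) + (w \<bullet> r)^2"
      proof -
        have "r \<bullet> (B' *\<^sub>v r) = (\<Sum>i<n. r $ i * (D *\<^sub>v r + outer_prod w *\<^sub>v r) $ i)"
          unfolding scalar_prod_def[of r] Bsplit[OF r] using r D w
          by (simp add: lessThan_atLeast0 del: index_mult_mat_vec)
        also have "\<dots> = (\<Sum>i<n. r $ i * (d i * r $ i + w $ i * (w \<bullet> r)))"
          by (rule sum.cong, insert D w r, auto simp: Dr Ov[OF r] simp del: index_mult_mat_vec)
        also have "\<dots> = (\<Sum>i<n. d i * (r $ i)^2) + (\<Sum>i<n. r $ i * w $ i) * (w \<bullet> r)"
          by (simp add: sum.distrib sum_distrib_right sum_distrib_left algebra_simps power2_eq_square)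
        also have "(\<Sum>i<n. r $ i * w $ i) = w \<bullet> r" unfolding scalar_prod_def using r
          by (auto simp: lessThan_atLeast0 mult.commute)
        finally show ?thesis by (simp add: power2_eq_square)
      qed
      finally have sum0: "(\<Sum>i<n. d i * (r $ i)^2) + (w \<bullet> r)^2 = 0" by simp
      have nn: "(\<Sum>i<n. d i * (r $ i)^2) \<ge> 0" using dnn by (auto intro!: sum_nonneg)
      have wr: "w \<bullet> r = 0" using sum0 nn by (smt (verit) zero_le_power2 power_eq_0_iff)
      have "(\<Sum>i<n. d i * (r $ i)^2) = 0" using sum0 wr by simp
      hence "\<forall>i\<in>{..<n}. d i * (r $ i)^2 = 0" using dnn by (subst sum_nonneg_eq_0_iff[symmetric], auto)
      hence ri: "r $ i = 0" if "i < n" "d i \<noteq> 0" for i using that by auto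
      have "Y $ k = Y \<bullet> unit_vec n k" using Y k by simp
      also have "\<dots> = z \<bullet> r" unfolding Y_def r_def by (rule RTvec[OF z unit_vec_carrier])
      also have "\<dots> = w \<bullet> r" unfolding scalar_prod_def using r w z
        by (auto simp: z_def ri intro!: sum.cong)
      finally show ?thesis using wr by simp
    qed
    have finS: "finite S"
    proof (rule finite_subset)
      show "S \<subseteq> e ` {..<n}" unfolding S_def by auto
    qed auto
    have "(\<Sum>k<n. Min S * (Y $ k)^2) \<le> (\<Sum>k<n. e k * (Y $ k)^2)"
    proof (rule sum_mono)
      fix k assume k: "k \<in> {..<n}"
      show "Min S * (Y $ k)^2 \<le> e k * (Y $ k)^2"
      proof (cases "e k = 0")
        case True thus ?thesis using Y0[of k] k by simp
      next
        case False
        hence "e k \<in> S" using k unfolding S_def by auto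
        hence "Min S \<le> e k" using finS by simp
        thus ?thesis by (simp add: mult_right_mono)
      qed
    qed
    also have "(\<Sum>k<n. Min S * (Y $ k)^2) = Min S * (Y \<bullet> Y)" unfolding scalar_prod_def using Y
      by (auto simp: sum_distrib_left lessThan_atLeast0 power2_eq_square)
    finally have "Min S * c \<le> c * c" using eY YY by simp
    thus ?thesis using cpos by simp
  qed
  have PD: "(\<Prod>i\<in>{i. i < n \<and> d i \<noteq> 0}. d i) \<ge> 0" using dnn by (auto intro: prod_nonneg)
  show ?thesis unfolding pdetB pdetA lmin M1 using M2 PD by (simp add: mult_right_mono)
qed

end
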